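(* Let $\mathcal{C}$ be a deflation-exact category and $\mathcal{A}\subseteq\mathcal{C}$ an admissibly deflation-percolating subcategory. Let $a\colon U\rightarrowtail V$ be an $\mathcal{A}^{-1}$-inflation and $b\colon V\twoheadrightarrow W$ an $\mathcal{A}^{-1}$-deflation. Then $b\circ a$ is an admissible morphism whose kernel and cokernel lie in $\mathcal{A}$.
   Context: A conflation category is an additive category with a class of kernel-cokernel pairs (closed under isomorphisms) called conflations; first map an inflation, second a deflation. A deflation-exact category is a conflation category satisfying: (R0) $1_0$ is a deflation; (R1) composites of deflations are deflations; (R2) pullbacks of deflations along arbitrary morphisms exist and are deflations. A morphism is admissible if it factors as a deflation followed by an inflation. A non-empty full subcategory $\mathcal{A}$ is admissibly deflation-percolating if: (A1) for every conflation $A'\rightarrowtail A\twoheadrightarrow A''$, $A\in\mathcal{A}$ iff $A',A''\in\mathcal{A}$; (A2) every morphism $C\to A$ with $A\in\mathcal{A}$ factors as a deflation $C\twoheadrightarrow A'$ followed by an inflation $A'\rightarrowtail A$ with $A'\in\mathcal{A}$; (A3) if $a\colon C\rightarrowtail D$ is an inflation and $b\colon C\twoheadrightarrow A$ a deflation with $A\in\mathcal{A}$, the pushout of $a$ along $b$ exists and yields a deflation $D\twoheadrightarrow P$ and an inflation $A\rightarrowtail P$. An $\mathcal{A}^{-1}$-inflation is an inflation with cokernel in $\mathcal{A}$; an $\mathcal{A}^{-1}$-deflation is a deflation with kernel in $\mathcal{A}$. *)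

theory Defs
  imports Main
begin

text \<open>Categories with explicit object/arrow carriers. Composition cmp C g f means g after f.
  Additive structure (addition, zero maps, negation on hom-sets) is carried as data.\<close>

record ('o, 'm) addcat =
  Ob   :: "'o set"
  Ar   :: "'m set"
  Dom  :: "'m \<Rightarrow> 'o"
  Cod  :: "'m \<Rightarrow> 'o"
  cmp  :: "'m \<Rightarrow> 'm \<Rightarrow> 'm"
  idt  :: "'o \<Rightarrow> 'm"
  addm :: "'m \<Rightarrow> 'm \<Rightarrow> 'm"
  zerm :: "'o \<Rightarrow> 'o \<Rightarrow> 'm"
  negm :: "'m \<Rightarrow> 'm"

definition hom :: "('o, 'm, 'x) addcat_scheme \<Rightarrow> 'o \<Rightarrow> 'o \<Rightarrow> 'm set" where
  "hom C X Y = {f \<in> Ar C. Dom C f = X \<and> Cod C f = Y}"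

definition category :: "('o, 'm, 'x) addcat_scheme \<Rightarrow> bool" where
  "category C \<longleftrightarrow>
    (\<forall>f\<in>Ar C. Dom C f \<in> Ob C \<and> Cod C f \<in> Ob C) \<and>
    (\<forall>X\<in>Ob C. idt C X \<in> hom C X X) \<and>
    (\<forall>X Y Z f g. f \<in> hom C X Y \<longrightarrow> g \<in> hom C Y Z \<longrightarrow> cmp C g f \<in> hom C X Z) \<and>
    (\<forall>W X Y Z f g h. f \<in> hom C W X \<longrightarrow> g \<in> hom C X Y \<longrightarrow> h \<in> hom C Y Z \<longrightarrow>
        cmp C h (cmp C g f) = cmp C (cmp C h g) f) \<and>
    (\<forall>f\<in>Ar C. cmp C (idt C (Cod C f)) f = f \<and> cmp C f (idt C (Dom C f)) = f)"

definition preadditive :: "('o, 'm, 'x) addcat_scheme \<Rightarrow> bool" where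
  "preadditive C \<longleftrightarrow>
    (\<forall>X\<in>Ob C. \<forall>Y\<in>Ob C.
       zerm C X Y \<in> hom C X Y \<and>
       (\<forall>f\<in>hom C X Y. \<forall>g\<in>hom C X Y. addm C f g \<in> hom C X Y) \<and>
       (\<forall>f\<in>hom C X Y. negm C f \<in> hom C X Y) \<and>
       (\<forall>f\<in>hom C X Y. \<forall>g\<in>hom C X Y. \<forall>h\<in>hom C X Y.
           addm C (addm C f g) h = addm C f (addm C g h)) \<and>
       (\<forall>f\<in>hom C X Y. \<forall>g\<in>hom C X Y. addm C f g = addm C g f) \<and>
       (\<forall>f\<in>hom C X Y. addm C (zerm C X Y) f = f) \<and>
       (\<forall>f\<in>hom C X Y. addm C (negm C f) f = zerm C X Y)) \<and>
    (\<forall>X Y Z f f' g. f \<in> hom C X Y \<longrightarrow> f' \<in> hom C X Y \<longrightarrow> g \<in> hom C Y Z \<longrightarrow>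
        cmp C g (addm C f f') = addm C (cmp C g f) (cmp C g f')) \<and>
    (\<forall>X Y Z f g g'. f \<in> hom C X Y \<longrightarrow> g \<in> hom C Y Z \<longrightarrow> g' \<in> hom C Y Z \<longrightarrow>
        cmp C (addm C g g') f = addm C (cmp C g f) (cmp C g' f))"

definition zero_object :: "('o, 'm, 'x) addcat_scheme \<Rightarrow> 'o \<Rightarrow> bool" where
  "zero_object C Z \<longleftrightarrow> Z \<in> Ob C \<and>
    (\<forall>X\<in>Ob C. (\<exists>!f. f \<in> hom C Z X) \<and> (\<exists>!f. f \<in> hom C X Z))"

definition has_biproducts :: "('o, 'm, 'x) addcat_scheme \<Rightarrow> bool" where
  "has_biproducts C \<longleftrightarrow> (\<forall>X\<in>Ob C. \<forall>Y\<in>Ob C. \<exists>P\<in>Ob C. \<exists>i1 i2 p1 p2.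
     i1 \<in> hom C X P \<and> i2 \<in> hom C Y P \<and> p1 \<in> hom C P X \<and> p2 \<in> hom C P Y \<and>
     cmp C p1 i1 = idt C X \<and> cmp C p2 i2 = idt C Y \<and>
     addm C (cmp C i1 p1) (cmp C i2 p2) = idt C P)"

definition additive_category :: "('o, 'm, 'x) addcat_scheme \<Rightarrow> bool" where
  "additive_category C \<longleftrightarrow> category C \<and> preadditive C \<and>
     (\<exists>Z. zero_object C Z) \<and> has_biproducts C"

definition is_iso :: "('o, 'm, 'x) addcat_scheme \<Rightarrow> 'm \<Rightarrow> bool" where
  "is_iso C f \<longleftrightarrow> f \<in> Ar C \<and> (\<exists>g \<in> hom C (Cod C f) (Dom C f).
      cmp C g f = idt C (Dom C f) \<and> cmp C f g = idt C (Cod C f))"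

definition is_kernel :: "('o, 'm, 'x) addcat_scheme \<Rightarrow> 'm \<Rightarrow> 'm \<Rightarrow> bool" where
  "is_kernel C k g \<longleftrightarrow> (\<exists>K B D. k \<in> hom C K B \<and> g \<in> hom C B D \<and> cmp C g k = zerm C K D \<and>
     (\<forall>T t. t \<in> hom C T B \<and> cmp C g t = zerm C T D \<longrightarrow>
        (\<exists>!u. u \<in> hom C T K \<and> cmp C k u = t)))"

definition is_cokernel :: "('o, 'm, 'x) addcat_scheme \<Rightarrow> 'm \<Rightarrow> 'm \<Rightarrow> bool" where
  "is_cokernel C c f \<longleftrightarrow> (\<exists>A B Q. f \<in> hom C A B \<and> c \<in> hom C B Q \<and> cmp C c f = zerm C A Q \<and>
     (\<forall>T t. t \<in> hom C B T \<and> cmp C t f = zerm C A T \<longrightarrow>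
        (\<exists>!u. u \<in> hom C Q T \<and> cmp C u c = t)))"

definition kc_pair :: "('o, 'm, 'x) addcat_scheme \<Rightarrow> 'm \<Rightarrow> 'm \<Rightarrow> bool" where
  "kc_pair C f g \<longleftrightarrow> is_kernel C f g \<and> is_cokernel C g f"

definition conflation_category :: "('o, 'm, 'x) addcat_scheme \<Rightarrow> ('m \<times> 'm) set \<Rightarrow> bool" where
  "conflation_category C E \<longleftrightarrow> additive_category C \<and>
    (\<forall>(f, g) \<in> E. kc_pair C f g) \<and>
    (\<forall>f g f' g' \<alpha> \<beta> \<gamma>. (f, g) \<in> E \<and> kc_pair C f' g' \<and>
        is_iso C \<alpha> \<and> is_iso C \<beta> \<and> is_iso C \<gamma> \<and>
        \<alpha> \<in> hom C (Dom C f) (Dom C f') \<and> \<beta> \<in> hom C (Cod C f) (Cod C f') \<and>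
        \<gamma> \<in> hom C (Cod C g) (Cod C g') \<and>
        cmp C f' \<alpha> = cmp C \<beta> f \<and> cmp C g' \<beta> = cmp C \<gamma> g \<longrightarrow> (f', g') \<in> E)"

definition inflation :: "('o, 'm, 'x) addcat_scheme \<Rightarrow> ('m \<times> 'm) set \<Rightarrow> 'm \<Rightarrow> bool" where
  "inflation C E f \<longleftrightarrow> (\<exists>g. (f, g) \<in> E)"

definition deflation :: "('o, 'm, 'x) addcat_scheme \<Rightarrow> ('m \<times> 'm) set \<Rightarrow> 'm \<Rightarrow> bool" where
  "deflation C E g \<longleftrightarrow> (\<exists>f. (f, g) \<in> E)"

definition is_pullback :: "('o, 'm, 'x) addcat_scheme \<Rightarrow> 'm \<Rightarrow> 'm \<Rightarrow> 'm \<Rightarrow> 'm \<Rightarrow> bool" where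
  "is_pullback C g t p q \<longleftrightarrow> (\<exists>B D T P. g \<in> hom C B D \<and> t \<in> hom C T D \<and>
     p \<in> hom C P B \<and> q \<in> hom C P T \<and> cmp C g p = cmp C t q \<and>
     (\<forall>S x y. x \<in> hom C S B \<and> y \<in> hom C S T \<and> cmp C g x = cmp C t y \<longrightarrow>
        (\<exists>!u. u \<in> hom C S P \<and> cmp C p u = x \<and> cmp C q u = y)))"

definition is_pushout :: "('o, 'm, 'x) addcat_scheme \<Rightarrow> 'm \<Rightarrow> 'm \<Rightarrow> 'm \<Rightarrow> 'm \<Rightarrow> bool" where
  "is_pushout C a b a' b' \<longleftrightarrow> (\<exists>X D A P. a \<in> hom C X D \<and> b \<in> hom C X A \<and>
     b' \<in> hom C D P \<and> a' \<in> hom C A P \<and> cmp C b' a = cmp C a' b \<and>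
     (\<forall>S x y. x \<in> hom C D S \<and> y \<in> hom C A S \<and> cmp C x a = cmp C y b \<longrightarrow>
        (\<exists>!u. u \<in> hom C P S \<and> cmp C u b' = x \<and> cmp C u a' = y)))"

definition deflation_exact :: "('o, 'm, 'x) addcat_scheme \<Rightarrow> ('m \<times> 'm) set \<Rightarrow> bool" where
  "deflation_exact C E \<longleftrightarrow> conflation_category C E \<and>
    \<comment> \<open>R0\<close>
    (\<exists>Z. zero_object C Z \<and> deflation C E (idt C Z)) \<and>
    \<comment> \<open>R1\<close>
    (\<forall>f g. deflation C E f \<and> deflation C E g \<and> Cod C f = Dom C g \<longrightarrow> deflation C E (cmp C g f)) \<and>
    \<comment> \<open>R2\<close>
    (\<forall>g t. deflation C E g \<and> t \<in> Ar C \<and> Cod C t = Cod C g \<longrightarrow>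
        (\<exists>p q. is_pullback C g t p q) \<and>
        (\<forall>p q. is_pullback C g t p q \<longrightarrow> deflation C E q))"

definition admissible :: "('o, 'm, 'x) addcat_scheme \<Rightarrow> ('m \<times> 'm) set \<Rightarrow> 'm \<Rightarrow> bool" where
  "admissible C E f \<longleftrightarrow> (\<exists>d i. deflation C E d \<and> inflation C E i \<and> Cod C d = Dom C i \<and>
      f = cmp C i d)"

definition adm_defl_percolating ::
  "('o, 'm, 'x) addcat_scheme \<Rightarrow> ('m \<times> 'm) set \<Rightarrow> 'o set \<Rightarrow> bool" where
  "adm_defl_percolating C E \<A> \<longleftrightarrow> \<A> \<noteq> {} \<and> \<A> \<subseteq> Ob C \<and>
    \<comment> \<open>A1\<close>
    (\<forall>(f, g) \<in> E. Cod C f \<in> \<A> \<longleftrightarrow> Dom C f \<in> \<A> \<and> Cod C g \<in> \<A>) \<and>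
    \<comment> \<open>A2\<close>
    (\<forall>f X Y. f \<in> hom C X Y \<and> Y \<in> \<A> \<longrightarrow>
        (\<exists>A' d i. A' \<in> \<A> \<and> d \<in> hom C X A' \<and> i \<in> hom C A' Y \<and>
            deflation C E d \<and> inflation C E i \<and> f = cmp C i d)) \<and>
    \<comment> \<open>A3\<close>
    (\<forall>a b. inflation C E a \<and> deflation C E b \<and> Dom C a = Dom C b \<and> Cod C b \<in> \<A> \<longrightarrow>
        (\<exists>a' b'. is_pushout C a b a' b') \<and>
        (\<forall>a' b'. is_pushout C a b a' b' \<longrightarrow> deflation C E b' \<and> inflation C E a'))"

definition A_inflation :: "('o, 'm, 'x) addcat_scheme \<Rightarrow> ('m \<times> 'm) set \<Rightarrow> 'o set \<Rightarrow> 'm \<Rightarrow> bool" where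
  "A_inflation C E \<A> f \<longleftrightarrow> (\<exists>g. (f, g) \<in> E \<and> Cod C g \<in> \<A>)"

definition A_deflation :: "('o, 'm, 'x) addcat_scheme \<Rightarrow> ('m \<times> 'm) set \<Rightarrow> 'o set \<Rightarrow> 'm \<Rightarrow> bool" where
  "A_deflation C E \<A> g \<longleftrightarrow> (\<exists>k. (k, g) \<in> E \<and> Dom C k \<in> \<A>)"

end

theory Submission
  imports Defs
begin


definition is_epi :: "('o, 'm, 'x) addcat_scheme \<Rightarrow> 'm \<Rightarrow> bool" where
  "is_epi C h \<longleftrightarrow> (\<forall>T x y. x \<in> hom C (Cod C h) T \<longrightarrow> y \<in> hom C (Cod C h) T \<longrightarrow>
      cmp C x h = cmp C y h \<longrightarrow> x = y)"

definition is_mono :: "('o, 'm, 'x) addcat_scheme \<Rightarrow> 'm \<Rightarrow> bool" where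
  "is_mono C h \<longleftrightarrow> (\<forall>T x y. x \<in> hom C T (Dom C h) \<longrightarrow> y \<in> hom C T (Dom C h) \<longrightarrow>
      cmp C h x = cmp C h y \<longrightarrow> x = y)"

locale dex =
  fixes C :: "('o, 'm) addcat" and E :: "('m \<times> 'm) set"
  assumes dex: "deflation_exact C E"
begin

lemma cat: "category C" and pre: "preadditive C" and conf: "conflation_category C E"
  using dex unfolding deflation_exact_def conflation_category_def additive_category_def by blast+

lemma homD: assumes "f \<in> hom C X Y"
  shows "f \<in> Ar C" "Dom C f = X" "Cod C f = Y" "X \<in> Ob C" "Y \<in> Ob C"
  using assms cat unfolding hom_def category_def by auto

lemma homI: "f \<in> Ar C \<Longrightarrow> f \<in> hom C (Dom C f) (Cod C f)" by (simp add: hom_def)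

lemma comp: "f \<in> hom C X Y \<Longrightarrow> g \<in> hom C Y Z \<Longrightarrow> cmp C g f \<in> hom C X Z"
  using cat unfolding category_def by blast

lemma assoc: "f \<in> hom C W X \<Longrightarrow> g \<in> hom C X Y \<Longrightarrow> h \<in> hom C Y Z \<Longrightarrow>
   cmp C h (cmp C g f) = cmp C (cmp C h g) f"
  using cat unfolding category_def by blast

lemma id_hom: "X \<in> Ob C \<Longrightarrow> idt C X \<in> hom C X X" using cat unfolding category_def by blast

lemma idl: assumes "f \<in> hom C X Y" shows "cmp C (idt C Y) f = f"
proof -
  have "f \<in> Ar C" "Cod C f = Y" using assms homD by auto
  then show ?thesis using cat unfolding category_def by blast
qed
lemma idr: assumes "f \<in> hom C X Y" shows "cmp C f (idt C X) = f"
proof -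
  have "f \<in> Ar C" "Dom C f = X" using assms homD by auto
  then show ?thesis using cat unfolding category_def by blast
qed

lemma pre_XY: assumes X: "X \<in> Ob C" and Y: "Y \<in> Ob C"
  shows "zerm C X Y \<in> hom C X Y \<and>
       (\<forall>f\<in>hom C X Y. \<forall>g\<in>hom C X Y. addm C f g \<in> hom C X Y) \<and>
       (\<forall>f\<in>hom C X Y. negm C f \<in> hom C X Y) \<and>
       (\<forall>f\<in>hom C X Y. \<forall>g\<in>hom C X Y. \<forall>h\<in>hom C X Y.
           addm C (addm C f g) h = addm C f (addm C g h)) \<and>
       (\<forall>f\<in>hom C X Y. \<forall>g\<in>hom C X Y. addm C f g = addm C g f) \<and>
       (\<forall>f\<in>hom C X Y. addm C (zerm C X Y) f = f) \<and>
       (\<forall>f\<in>hom C X Y. addm C (negm C f) f = zerm C X Y)"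
proof -
  have "\<forall>X\<in>Ob C. \<forall>Y\<in>Ob C.
       zerm C X Y \<in> hom C X Y \<and>
       (\<forall>f\<in>hom C X Y. \<forall>g\<in>hom C X Y. addm C f g \<in> hom C X Y) \<and>
       (\<forall>f\<in>hom C X Y. negm C f \<in> hom C X Y) \<and>
       (\<forall>f\<in>hom C X Y. \<forall>g\<in>hom C X Y. \<forall>h\<in>hom C X Y.
           addm C (addm C f g) h = addm C f (addm C g h)) \<and>
       (\<forall>f\<in>hom C X Y. \<forall>g\<in>hom C X Y. addm C f g = addm C g f) \<and>
       (\<forall>f\<in>hom C X Y. addm C (zerm C X Y) f = f) \<and>
       (\<forall>f\<in>hom C X Y. addm C (negm C f) f = zerm C X Y)"
    using pre unfolding preadditive_def by (rule conjunct1)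
  from bspec[OF bspec[OF this X] Y] show ?thesis .
qed

lemma zero_hom: "X \<in> Ob C \<Longrightarrow> Y \<in> Ob C \<Longrightarrow> zerm C X Y \<in> hom C X Y"
  using pre_XY by simp
lemma add_hom: assumes "f \<in> hom C X Y" "g \<in> hom C X Y"
  shows "addm C f g \<in> hom C X Y"
  using pre_XY[OF homD(4)[OF assms(1)] homD(5)[OF assms(1)]] assms by blast
lemma neg_hom: assumes "f \<in> hom C X Y"
  shows "negm C f \<in> hom C X Y"
  using pre_XY[OF homD(4)[OF assms(1)] homD(5)[OF assms(1)]] assms by blast
lemma add_assoc: assumes "f \<in> hom C X Y" "g \<in> hom C X Y" "h \<in> hom C X Y"
  shows "addm C (addm C f g) h = addm C f (addm C g h)"
  using pre_XY[OF homD(4)[OF assms(1)] homD(5)[OF assms(1)]] assms by blast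
lemma add_comm: assumes "f \<in> hom C X Y" "g \<in> hom C X Y"
  shows "addm C f g = addm C g f"
  using pre_XY[OF homD(4)[OF assms(1)] homD(5)[OF assms(1)]] assms by blast
lemma add_zero_l: assumes "f \<in> hom C X Y"
  shows "addm C (zerm C X Y) f = f"
  using pre_XY[OF homD(4)[OF assms(1)] homD(5)[OF assms(1)]] assms by blast
lemma add_neg_l: assumes "f \<in> hom C X Y"
  shows "addm C (negm C f) f = zerm C X Y"
  using pre_XY[OF homD(4)[OF assms(1)] homD(5)[OF assms(1)]] assms by blast
lemma distl: assumes "f \<in> hom C X Y" "f' \<in> hom C X Y" "g \<in> hom C Y Z"
  shows "cmp C g (addm C f f') = addm C (cmp C g f) (cmp C g f')"
proof -
  have "\<forall>X Y Z f f' g. f \<in> hom C X Y \<longrightarrow> f' \<in> hom C X Y \<longrightarrow> g \<in> hom C Y Z \<longrightarrow>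
        cmp C g (addm C f f') = addm C (cmp C g f) (cmp C g f')"
    using pre unfolding preadditive_def by (elim conjE)
  then show ?thesis using assms by blast
qed
lemma distr: assumes "f \<in> hom C X Y" "g \<in> hom C Y Z" "g' \<in> hom C Y Z"
  shows "cmp C (addm C g g') f = addm C (cmp C g f) (cmp C g' f)"
proof -
  have "\<forall>X Y Z f g g'. f \<in> hom C X Y \<longrightarrow> g \<in> hom C Y Z \<longrightarrow> g' \<in> hom C Y Z \<longrightarrow>
        cmp C (addm C g g') f = addm C (cmp C g f) (cmp C g' f)"
    using pre unfolding preadditive_def by (elim conjE)
  then show ?thesis using assms by blast
qed

lemma add_zero_r: assumes f: "f \<in> hom C X Y" shows "addm C f (zerm C X Y) = f"
proof -
  have z: "zerm C X Y \<in> hom C X Y" using zero_hom homD(4,5)[OF f] by blast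
  show ?thesis using add_comm[OF f z] add_zero_l[OF f] by simp
qed
lemma add_neg_r: assumes f: "f \<in> hom C X Y" shows "addm C f (negm C f) = zerm C X Y"
  using add_comm[OF f neg_hom[OF f]] add_neg_l[OF f] by simp

lemma idem_zero:
  assumes h: "x \<in> hom C X Y" and e: "addm C x x = x" shows "x = zerm C X Y"
proof -
  have n: "negm C x \<in> hom C X Y" using neg_hom[OF h] .
  have "zerm C X Y = addm C (negm C x) x" using add_neg_l h by simp
  also have "\<dots> = addm C (negm C x) (addm C x x)" using e by simp
  also have "\<dots> = addm C (addm C (negm C x) x) x" using add_assoc[OF n h h] by simp
  also have "\<dots> = x" using add_neg_l add_zero_l h by simp
  finally show ?thesis by simp
qed

lemma zero_r: assumes g: "g \<in> hom C Y Z" and X: "X \<in> Ob C"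
  shows "cmp C g (zerm C X Y) = zerm C X Z"
proof -
  have z: "zerm C X Y \<in> hom C X Y" using zero_hom[OF X homD(4)[OF g]] .
  have "cmp C g (zerm C X Y) = cmp C g (addm C (zerm C X Y) (zerm C X Y))"
    using add_zero_l z by simp
  also have "\<dots> = addm C (cmp C g (zerm C X Y)) (cmp C g (zerm C X Y))"
    using distl[OF z z g] .
  finally show ?thesis using idem_zero[OF comp[OF z g]] by simp
qed

lemma zero_l: assumes f: "f \<in> hom C X Y" and Z: "Z \<in> Ob C"
  shows "cmp C (zerm C Y Z) f = zerm C X Z"
proof -
  have z: "zerm C Y Z \<in> hom C Y Z" using zero_hom[OF homD(5)[OF f] Z] .
  have "cmp C (zerm C Y Z) f = cmp C (addm C (zerm C Y Z) (zerm C Y Z)) f"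
    using add_zero_l z by simp
  also have "\<dots> = addm C (cmp C (zerm C Y Z) f) (cmp C (zerm C Y Z) f)"
    using distr[OF f z z] .
  finally show ?thesis using idem_zero[OF comp[OF f z]] by simp
qed

lemma neg_unique: assumes a: "a \<in> hom C X Y" and b: "b \<in> hom C X Y" and e: "addm C a b = zerm C X Y"
  shows "a = negm C b"
proof -
  have n: "negm C b \<in> hom C X Y" using neg_hom[OF b] .
  have "a = addm C a (addm C b (negm C b))" using add_neg_r[OF b] add_zero_r[OF a] by simp
  also have "\<dots> = addm C (addm C a b) (negm C b)" using add_assoc[OF a b n] by simp
  also have "\<dots> = negm C b" using e add_zero_l[OF n] by simp
  finally show ?thesis .
qed

lemma neg_neg: assumes f: "f \<in> hom C X Y" shows "f = negm C (negm C f)"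
  using neg_unique[OF f neg_hom[OF f] add_neg_r[OF f]] .

lemma cmp_neg: assumes f: "f \<in> hom C X Y" and g: "g \<in> hom C Y Z"
  shows "cmp C g (negm C f) = negm C (cmp C g f)"
proof -
  have n: "negm C f \<in> hom C X Y" using neg_hom[OF f] .
  have "addm C (cmp C g (negm C f)) (cmp C g f) = cmp C g (addm C (negm C f) f)"
    using distl[OF n f g] by simp
  also have "\<dots> = zerm C X Z" using add_neg_l[OF f] zero_r[OF g homD(4)[OF f]] by simp
  finally show ?thesis using neg_unique[OF comp[OF n g] comp[OF f g]] by simp
qed

lemma neg_zero: assumes "X \<in> Ob C" "Y \<in> Ob C" shows "negm C (zerm C X Y) = zerm C X Y"
proof -
  have z: "zerm C X Y \<in> hom C X Y" using zero_hom assms by blast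
  show ?thesis using neg_unique[OF z z add_zero_l[OF z]] by simp
qed

lemma mono_of_zero:
  assumes f: "f \<in> hom C X Y"
    and z: "\<And>T y. y \<in> hom C T X \<Longrightarrow> cmp C f y = zerm C T Y \<Longrightarrow> y = zerm C T X"
  shows "is_mono C f"
  unfolding is_mono_def
proof (intro allI impI)
  fix T y1 y2 assume y1: "y1 \<in> hom C T (Dom C f)" and y2: "y2 \<in> hom C T (Dom C f)"
    and eq: "cmp C f y1 = cmp C f y2"
  have y1': "y1 \<in> hom C T X" and y2': "y2 \<in> hom C T X" using y1 y2 homD(2)[OF f] by auto
  have n: "negm C y2 \<in> hom C T X" using neg_hom[OF y2'] .
  have "cmp C f (addm C y1 (negm C y2)) = addm C (cmp C f y1) (cmp C f (negm C y2))"
    using distl[OF y1' n f] .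
  also have "\<dots> = addm C (cmp C f y2) (negm C (cmp C f y2))" using eq cmp_neg[OF y2' f] by simp
  also have "\<dots> = zerm C T Y" using add_neg_r[OF comp[OF y2' f]] .
  finally have "addm C y1 (negm C y2) = zerm C T X" using z add_hom[OF y1' n] by blast
  then have "y1 = negm C (negm C y2)" using neg_unique[OF y1' n] by simp
  then show "y1 = y2" using neg_neg[OF y2'] by simp
qed

lemma epiD: assumes "is_epi C h" "h \<in> hom C X Y" "x \<in> hom C Y T" "y \<in> hom C Y T"
   "cmp C x h = cmp C y h" shows "x = y"
  using assms homD(3)[OF assms(2)] unfolding is_epi_def by blast
lemma monoD: assumes "is_mono C h" "h \<in> hom C X Y" "x \<in> hom C T X" "y \<in> hom C T X"
   "cmp C h x = cmp C h y" shows "x = y"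
  using assms homD(2)[OF assms(2)] unfolding is_mono_def by blast

lemma epiI: assumes h: "h \<in> hom C X Y"
  and "\<And>T x y. x \<in> hom C Y T \<Longrightarrow> y \<in> hom C Y T \<Longrightarrow> cmp C x h = cmp C y h \<Longrightarrow> x = y"
  shows "is_epi C h"
  using assms homD(3)[OF h] unfolding is_epi_def by blast
lemma monoI: assumes h: "h \<in> hom C X Y"
  and "\<And>T x y. x \<in> hom C T X \<Longrightarrow> y \<in> hom C T X \<Longrightarrow> cmp C h x = cmp C h y \<Longrightarrow> x = y"
  shows "is_mono C h"
  using assms homD(2)[OF h] unfolding is_mono_def by blast

lemma epi_comp: assumes f: "f \<in> hom C X Y" and g: "g \<in> hom C Y Z" and ef: "is_epi C f" and eg: "is_epi C g"
  shows "is_epi C (cmp C g f)"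
proof (rule epiI[OF comp[OF f g]])
  fix T x y assume x: "x \<in> hom C Z T" and y: "y \<in> hom C Z T"
    and eq: "cmp C x (cmp C g f) = cmp C y (cmp C g f)"
  have "cmp C (cmp C x g) f = cmp C (cmp C y g) f" using eq assoc[OF f g x] assoc[OF f g y] by simp
  then have "cmp C x g = cmp C y g" using epiD[OF ef f comp[OF g x] comp[OF g y]] by simp
  then show "x = y" using epiD[OF eg g x y] by simp
qed

lemma epi_cancel: assumes f: "f \<in> hom C X Y" and g: "g \<in> hom C Y Z" and e: "is_epi C (cmp C g f)"
  shows "is_epi C g"
proof (rule epiI[OF g])
  fix T x y assume x: "x \<in> hom C Z T" and y: "y \<in> hom C Z T"
    and eq: "cmp C x g = cmp C y g"
  have "cmp C x (cmp C g f) = cmp C y (cmp C g f)" using eq assoc[OF f g x] assoc[OF f g y] by simp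
  then show "x = y" using epiD[OF e comp[OF f g] x y] by simp
qed

lemma mono_comp: assumes f: "f \<in> hom C X Y" and g: "g \<in> hom C Y Z" and mf: "is_mono C f" and mg: "is_mono C g"
  shows "is_mono C (cmp C g f)"
proof (rule monoI[OF comp[OF f g]])
  fix T x y assume x: "x \<in> hom C T X" and y: "y \<in> hom C T X"
    and eq: "cmp C (cmp C g f) x = cmp C (cmp C g f) y"
  have "cmp C g (cmp C f x) = cmp C g (cmp C f y)" using eq assoc[OF x f g] assoc[OF y f g] by simp
  then have "cmp C f x = cmp C f y" using monoD[OF mg g comp[OF x f] comp[OF y f]] by simp
  then show "x = y" using monoD[OF mf f x y] by simp
qed

end

lemma ex1_uniq: "\<exists>!x. P x \<Longrightarrow> P a \<Longrightarrow> P b \<Longrightarrow> a = b" by blast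

context dex begin

lemma kerE: assumes "is_kernel C k g" "k \<in> hom C K B" "g \<in> hom C B D"
  shows "cmp C g k = zerm C K D \<and> (\<forall>T t. t \<in> hom C T B \<and> cmp C g t = zerm C T D \<longrightarrow>
           (\<exists>!u. u \<in> hom C T K \<and> cmp C k u = t))"
proof -
  obtain K' B' D' where h: "k \<in> hom C K' B'" "g \<in> hom C B' D'" "cmp C g k = zerm C K' D'"
     "\<forall>T t. t \<in> hom C T B' \<and> cmp C g t = zerm C T D' \<longrightarrow> (\<exists>!u. u \<in> hom C T K' \<and> cmp C k u = t)"
    using assms(1) unfolding is_kernel_def by blast
  have "K' = K" using homD(2)[OF h(1)] homD(2)[OF assms(2)] by simp
  moreover have "B' = B" using homD(3)[OF h(1)] homD(3)[OF assms(2)] by simp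
  moreover have "D' = D" using homD(3)[OF h(2)] homD(3)[OF assms(3)] by simp
  ultimately show ?thesis using h by simp
qed

lemma ker_zero: assumes "is_kernel C k g" "k \<in> hom C K B" "g \<in> hom C B D" shows "cmp C g k = zerm C K D"
  using kerE[OF assms] by (rule conjunct1)

lemma ker_lift: assumes "is_kernel C k g" "k \<in> hom C K B" "g \<in> hom C B D" "t \<in> hom C T B"
   "cmp C g t = zerm C T D" shows "\<exists>u. u \<in> hom C T K \<and> cmp C k u = t"
proof -
  have "\<exists>!u. u \<in> hom C T K \<and> cmp C k u = t" using conjunct2[OF kerE[OF assms(1-3)], rule_format, of t T] assms(4,5) by blast
  then show ?thesis by (rule ex1_implies_ex)
qed

lemma ker_mono: assumes kk: "is_kernel C k g" and k: "k \<in> hom C K B" and g: "g \<in> hom C B D"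
  shows "is_mono C k"
proof (rule monoI[OF k])
  fix T x y assume x: "x \<in> hom C T K" and y: "y \<in> hom C T K" and eq: "cmp C k x = cmp C k y"
  have t: "cmp C k x \<in> hom C T B" using comp[OF x k] .
  have "cmp C g (cmp C k x) = cmp C (cmp C g k) x" using assoc[OF x k g] .
  also have "\<dots> = zerm C T D" using ker_zero[OF kk k g] zero_l[OF x homD(5)[OF g]] by simp
  finally have gz: "cmp C g (cmp C k x) = zerm C T D" .
  have "\<exists>!u. u \<in> hom C T K \<and> cmp C k u = cmp C k x"
    using conjunct2[OF kerE[OF kk k g], rule_format, of "cmp C k x" T] t gz by simp
  then show "x = y" by (rule ex1_uniq) (use x y eq in simp)+
qed

lemma kerI: assumes k: "k \<in> hom C K B" and g: "g \<in> hom C B D" and z: "cmp C g k = zerm C K D"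
  and l: "\<And>T t. t \<in> hom C T B \<Longrightarrow> cmp C g t = zerm C T D \<Longrightarrow> \<exists>u. u \<in> hom C T K \<and> cmp C k u = t"
  and m: "is_mono C k"
  shows "is_kernel C k g"
  unfolding is_kernel_def
proof (intro exI conjI allI impI)
  show "k \<in> hom C K B" "g \<in> hom C B D" "cmp C g k = zerm C K D" using k g z by auto
  fix T t assume "t \<in> hom C T B \<and> cmp C g t = zerm C T D"
  then obtain u where u: "u \<in> hom C T K" "cmp C k u = t" using l by blast
  show "\<exists>!u. u \<in> hom C T K \<and> cmp C k u = t"
  proof (rule ex1I[of _ u])
    show "u \<in> hom C T K \<and> cmp C k u = t" using u by simp
    fix v assume "v \<in> hom C T K \<and> cmp C k v = t"
    then show "v = u" using monoD[OF m k] u by auto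
  qed
qed

lemma cokE: assumes "is_cokernel C c f" "f \<in> hom C A B" "c \<in> hom C B Q"
  shows "cmp C c f = zerm C A Q \<and> (\<forall>T t. t \<in> hom C B T \<and> cmp C t f = zerm C A T \<longrightarrow>
           (\<exists>!u. u \<in> hom C Q T \<and> cmp C u c = t))"
proof -
  obtain A' B' Q' where h: "f \<in> hom C A' B'" "c \<in> hom C B' Q'" "cmp C c f = zerm C A' Q'"
     "\<forall>T t. t \<in> hom C B' T \<and> cmp C t f = zerm C A' T \<longrightarrow> (\<exists>!u. u \<in> hom C Q' T \<and> cmp C u c = t)"
    using assms(1) unfolding is_cokernel_def by blast
  have "A' = A" using homD(2)[OF h(1)] homD(2)[OF assms(2)] by simp
  moreover have "B' = B" using homD(3)[OF h(1)] homD(3)[OF assms(2)] by simp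
  moreover have "Q' = Q" using homD(3)[OF h(2)] homD(3)[OF assms(3)] by simp
  ultimately show ?thesis using h by simp
qed

lemma cok_zero: assumes "is_cokernel C c f" "f \<in> hom C A B" "c \<in> hom C B Q" shows "cmp C c f = zerm C A Q"
  using cokE[OF assms] by (rule conjunct1)

lemma cok_desc: assumes "is_cokernel C c f" "f \<in> hom C A B" "c \<in> hom C B Q" "t \<in> hom C B T"
   "cmp C t f = zerm C A T" shows "\<exists>u. u \<in> hom C Q T \<and> cmp C u c = t"
proof -
  have "\<exists>!u. u \<in> hom C Q T \<and> cmp C u c = t" using conjunct2[OF cokE[OF assms(1-3)], rule_format, of t T] assms(4,5) by blast
  then show ?thesis by (rule ex1_implies_ex)
qed

lemma cok_epi: assumes cc: "is_cokernel C c f" and f: "f \<in> hom C A B" and c: "c \<in> hom C B Q"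
  shows "is_epi C c"
proof (rule epiI[OF c])
  fix T x y assume x: "x \<in> hom C Q T" and y: "y \<in> hom C Q T" and eq: "cmp C x c = cmp C y c"
  have t: "cmp C x c \<in> hom C B T" using comp[OF c x] .
  have "cmp C (cmp C x c) f = cmp C x (cmp C c f)" using assoc[OF f c x] by simp
  also have "\<dots> = zerm C A T" using cok_zero[OF cc f c] zero_r[OF x homD(4)[OF f]] by simp
  finally have gz: "cmp C (cmp C x c) f = zerm C A T" .
  have "\<exists>!u. u \<in> hom C Q T \<and> cmp C u c = cmp C x c"
    using conjunct2[OF cokE[OF cc f c], rule_format, of "cmp C x c" T] t gz by simp
  then show "x = y" by (rule ex1_uniq) (use x y eq in simp)+
qed

lemma cokI: assumes f: "f \<in> hom C A B" and c: "c \<in> hom C B Q" and z: "cmp C c f = zerm C A Q"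
  and l: "\<And>T t. t \<in> hom C B T \<Longrightarrow> cmp C t f = zerm C A T \<Longrightarrow> \<exists>u. u \<in> hom C Q T \<and> cmp C u c = t"
  and m: "is_epi C c"
  shows "is_cokernel C c f"
  unfolding is_cokernel_def
proof (intro exI conjI allI impI)
  show "f \<in> hom C A B" "c \<in> hom C B Q" "cmp C c f = zerm C A Q" using f c z by auto
  fix T t assume "t \<in> hom C B T \<and> cmp C t f = zerm C A T"
  then obtain u where u: "u \<in> hom C Q T" "cmp C u c = t" using l by blast
  show "\<exists>!u. u \<in> hom C Q T \<and> cmp C u c = t"
  proof (rule ex1I[of _ u])
    show "u \<in> hom C Q T \<and> cmp C u c = t" using u by simp
    fix v assume "v \<in> hom C Q T \<and> cmp C v c = t"
    then show "v = u" using epiD[OF m c] u by auto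
  qed
qed

lemma confE: assumes "(f, g) \<in> E"
  obtains K B D where "f \<in> hom C K B" "g \<in> hom C B D" "is_kernel C f g" "is_cokernel C g f"
proof -
  have all: "\<forall>(f, g) \<in> E. kc_pair C f g" using conf unfolding conflation_category_def by (elim conjE)
  have kc: "kc_pair C f g" using bspec[OF all assms] by simp
  then have "is_kernel C f g" "is_cokernel C g f" unfolding kc_pair_def by auto
  moreover obtain K B D where "f \<in> hom C K B" "g \<in> hom C B D"
    using \<open>is_kernel C f g\<close> unfolding is_kernel_def by blast
  ultimately show ?thesis using that by blast
qed

lemma conf_closed: assumes "(f, g) \<in> E" "kc_pair C f' g'" "is_iso C \<alpha>" "is_iso C \<beta>" "is_iso C \<gamma>"
  "\<alpha> \<in> hom C (Dom C f) (Dom C f')" "\<beta> \<in> hom C (Cod C f) (Cod C f')"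
  "\<gamma> \<in> hom C (Cod C g) (Cod C g')" "cmp C f' \<alpha> = cmp C \<beta> f" "cmp C g' \<beta> = cmp C \<gamma> g"
  shows "(f', g') \<in> E"
proof -
  have "\<forall>f g f' g' \<alpha> \<beta> \<gamma>. (f, g) \<in> E \<and> kc_pair C f' g' \<and>
        is_iso C \<alpha> \<and> is_iso C \<beta> \<and> is_iso C \<gamma> \<and>
        \<alpha> \<in> hom C (Dom C f) (Dom C f') \<and> \<beta> \<in> hom C (Cod C f) (Cod C f') \<and>
        \<gamma> \<in> hom C (Cod C g) (Cod C g') \<and>
        cmp C f' \<alpha> = cmp C \<beta> f \<and> cmp C g' \<beta> = cmp C \<gamma> g \<longrightarrow> (f', g') \<in> E"
    using conf unfolding conflation_category_def by (elim conjE)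
  then have "(f, g) \<in> E \<and> kc_pair C f' g' \<and>
        is_iso C \<alpha> \<and> is_iso C \<beta> \<and> is_iso C \<gamma> \<and>
        \<alpha> \<in> hom C (Dom C f) (Dom C f') \<and> \<beta> \<in> hom C (Cod C f) (Cod C f') \<and>
        \<gamma> \<in> hom C (Cod C g) (Cod C g') \<and>
        cmp C f' \<alpha> = cmp C \<beta> f \<and> cmp C g' \<beta> = cmp C \<gamma> g \<longrightarrow> (f', g') \<in> E"
    by (elim allE[of _ f] allE[of _ g] allE[of _ f'] allE[of _ g'] allE[of _ \<alpha>] allE[of _ \<beta>] allE[of _ \<gamma>])
  then show ?thesis using assms by simp
qed

lemma isoI: assumes a: "\<alpha> \<in> hom C X Y" and b: "\<beta> \<in> hom C Y X"
  and "cmp C \<beta> \<alpha> = idt C X" and "cmp C \<alpha> \<beta> = idt C Y" shows "is_iso C \<alpha>"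
  unfolding is_iso_def using assms homD(1,2,3)[OF a] by auto

lemma iso_id: assumes "X \<in> Ob C" shows "is_iso C (idt C X)"
proof -
  have i: "idt C X \<in> hom C X X" using id_hom assms by blast
  show ?thesis by (rule isoI[OF i i]) (use idl[OF i] in simp)+
qed

lemma K_replace: assumes me: "(m, e) \<in> E" and fe: "is_kernel C f e" shows "(f, e) \<in> E"
proof -
  obtain I W Q where m: "m \<in> hom C I W" and e: "e \<in> hom C W Q" and km: "is_kernel C m e"
    and ce: "is_cokernel C e m" using confE[OF me] by blast
  obtain I' W' Q' where f: "f \<in> hom C I' W'" and e': "e \<in> hom C W' Q'"
    using fe unfolding is_kernel_def by blast
  have "W' = W" "Q' = Q" using homD(2,3)[OF e] homD(2,3)[OF e'] by auto
  then have f: "f \<in> hom C I' W" using f by simp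
  have em: "cmp C e m = zerm C I Q" using ker_zero[OF km m e] .
  have ef: "cmp C e f = zerm C I' Q" using ker_zero[OF fe f e] .
  obtain \<alpha> where a: "\<alpha> \<in> hom C I I'" "cmp C f \<alpha> = m" using ker_lift[OF fe f e m em] by blast
  obtain \<beta> where b: "\<beta> \<in> hom C I' I" "cmp C m \<beta> = f" using ker_lift[OF km m e f ef] by blast
  have I': "I' \<in> Ob C" and I: "I \<in> Ob C" using homD(4)[OF f] homD(4)[OF m] by auto
  have "cmp C f (cmp C \<alpha> \<beta>) = cmp C f (idt C I')"
    using assoc[OF b(1) a(1) f] a(2) b(2) idr[OF f] by simp
  then have ab: "cmp C \<alpha> \<beta> = idt C I'"
    using monoD[OF ker_mono[OF fe f e] f comp[OF b(1) a(1)] id_hom[OF I']] by simp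
  have "cmp C m (cmp C \<beta> \<alpha>) = cmp C m (idt C I)"
    using assoc[OF a(1) b(1) m] a(2) b(2) idr[OF m] by simp
  then have ba: "cmp C \<beta> \<alpha> = idt C I"
    using monoD[OF ker_mono[OF km m e] m comp[OF a(1) b(1)] id_hom[OF I]] by simp
  have isoa: "is_iso C \<alpha>" using isoI[OF a(1) b(1) ba ab] .
  have cef: "is_cokernel C e f"
  proof (rule cokI[OF f e ef])
    fix T t assume t: "t \<in> hom C W T" and tf: "cmp C t f = zerm C I' T"
    have "cmp C t m = cmp C (cmp C t f) \<alpha>" using a assoc[OF a(1) f t] by simp
    also have "\<dots> = zerm C I T" using tf zero_l[OF a(1) homD(5)[OF t]] by simp
    finally show "\<exists>u. u \<in> hom C Q T \<and> cmp C u e = t" using cok_desc[OF ce m e t] by blast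
  next
    show "is_epi C e" using cok_epi[OF ce m e] .
  qed
  have W: "W \<in> Ob C" and Q: "Q \<in> Ob C" using homD(4,5)[OF e] by auto
  show ?thesis
  proof (rule conf_closed[OF me _ isoa iso_id[OF W] iso_id[OF Q]])
    show "kc_pair C f e" unfolding kc_pair_def using fe cef by simp
    show "\<alpha> \<in> hom C (Dom C m) (Dom C f)" using a(1) homD(2)[OF m] homD(2)[OF f] by simp
    show "idt C W \<in> hom C (Cod C m) (Cod C f)" using id_hom[OF W] homD(3)[OF m] homD(3)[OF f] by simp
    show "idt C Q \<in> hom C (Cod C e) (Cod C e)" using id_hom[OF Q] homD(3)[OF e] by simp
    show "cmp C f \<alpha> = cmp C (idt C W) m" using a(2) idl[OF m] by simp
    show "cmp C e (idt C W) = cmp C (idt C Q) e" using idl[OF e] idr[OF e] by simp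
  qed
qed

lemma C_replace: assumes me: "(m, e) \<in> E" and hm: "is_cokernel C h m" shows "(m, h) \<in> E"
proof -
  obtain I W Q where m: "m \<in> hom C I W" and e: "e \<in> hom C W Q" and km: "is_kernel C m e"
    and ce: "is_cokernel C e m" using confE[OF me] by blast
  obtain I' W' Q' where m': "m \<in> hom C I' W'" and h: "h \<in> hom C W' Q'"
    using hm unfolding is_cokernel_def by blast
  have "W' = W" using homD(3)[OF m] homD(3)[OF m'] by auto
  then have h: "h \<in> hom C W Q'" using h by simp
  have em: "cmp C e m = zerm C I Q" using cok_zero[OF ce m e] .
  have hm0: "cmp C h m = zerm C I Q'" using cok_zero[OF hm m h] .
  obtain \<gamma> where g: "\<gamma> \<in> hom C Q Q'" "cmp C \<gamma> e = h" using cok_desc[OF ce m e h hm0] by blast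
  obtain \<delta> where d: "\<delta> \<in> hom C Q' Q" "cmp C \<delta> h = e" using cok_desc[OF hm m h e em] by blast
  have Q': "Q' \<in> Ob C" and Q: "Q \<in> Ob C" using homD(5)[OF h] homD(5)[OF e] by auto
  have "cmp C (cmp C \<gamma> \<delta>) h = cmp C (idt C Q') h"
    using assoc[OF h d(1) g(1)] g(2) d(2) idl[OF h] by simp
  then have gd: "cmp C \<gamma> \<delta> = idt C Q'"
    using epiD[OF cok_epi[OF hm m h] h comp[OF d(1) g(1)] id_hom[OF Q']] by simp
  have "cmp C (cmp C \<delta> \<gamma>) e = cmp C (idt C Q) e"
    using assoc[OF e g(1) d(1)] g(2) d(2) idl[OF e] by simp
  then have dg: "cmp C \<delta> \<gamma> = idt C Q"
    using epiD[OF cok_epi[OF ce m e] e comp[OF g(1) d(1)] id_hom[OF Q]] by simp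
  have isog: "is_iso C \<gamma>" using isoI[OF g(1) d(1) dg gd] .
  have kmh: "is_kernel C m h"
  proof (rule kerI[OF m h hm0])
    fix T t assume t: "t \<in> hom C T W" and ht: "cmp C h t = zerm C T Q'"
    have "cmp C e t = cmp C \<delta> (cmp C h t)" using d assoc[OF t h d(1)] by simp
    also have "\<dots> = zerm C T Q" using ht zero_r[OF d(1) homD(4)[OF t]] by simp
    finally show "\<exists>u. u \<in> hom C T I \<and> cmp C m u = t" using ker_lift[OF km m e t] by blast
  next
    show "is_mono C m" using ker_mono[OF km m e] .
  qed
  have W: "W \<in> Ob C" and I: "I \<in> Ob C" using homD(4,5)[OF m] by auto
  show ?thesis
  proof (rule conf_closed[OF me _ iso_id[OF I] iso_id[OF W] isog])
    show "kc_pair C m h" unfolding kc_pair_def using kmh hm by simp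
    show "idt C I \<in> hom C (Dom C m) (Dom C m)" using id_hom[OF I] homD(2)[OF m] by simp
    show "idt C W \<in> hom C (Cod C m) (Cod C m)" using id_hom[OF W] homD(3)[OF m] by simp
    show "\<gamma> \<in> hom C (Cod C e) (Cod C h)" using g(1) homD(3)[OF e] homD(3)[OF h] by simp
    show "cmp C m (idt C I) = cmp C (idt C W) m" using idl[OF m] idr[OF m] by simp
    show "cmp C h (idt C W) = cmp C \<gamma> e" using g(2) idr[OF h] by simp
  qed
qed

end


lemma mono_cancel_aux: True by simp

context dex begin

lemma mono_cancel: assumes f: "f \<in> hom C X Y" and g: "g \<in> hom C Y Z" and m: "is_mono C (cmp C g f)"
  shows "is_mono C f"
proof (rule monoI[OF f])
  fix T x y assume x: "x \<in> hom C T X" and y: "y \<in> hom C T X" and eq: "cmp C f x = cmp C f y"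
  have "cmp C (cmp C g f) x = cmp C (cmp C g f) y" using eq assoc[OF x f g] assoc[OF y f g] by simp
  then show "x = y" using monoD[OF m comp[OF f g] x y] by simp
qed

lemma E_defl: "(f, g) \<in> E \<Longrightarrow> deflation C E g" unfolding deflation_def by blast
lemma E_infl: "(f, g) \<in> E \<Longrightarrow> inflation C E f" unfolding inflation_def by blast

lemma defl_epi: assumes d: "deflation C E g" and g: "g \<in> hom C B D" shows "is_epi C g"
proof -
  obtain f where fg: "(f, g) \<in> E" using d unfolding deflation_def by blast
  obtain K B' D' where f: "f \<in> hom C K B'" and g': "g \<in> hom C B' D'" and c: "is_cokernel C g f"
    using confE[OF fg] by blast
  show ?thesis using cok_epi[OF c f g'] .
qed

lemma pbI: assumes g: "g \<in> hom C B D" and t: "t \<in> hom C T D" and p: "p \<in> hom C P B"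
  and q: "q \<in> hom C P T" and c: "cmp C g p = cmp C t q"
  and u: "\<And>S x y. x \<in> hom C S B \<Longrightarrow> y \<in> hom C S T \<Longrightarrow> cmp C g x = cmp C t y \<Longrightarrow>
           \<exists>!u. u \<in> hom C S P \<and> cmp C p u = x \<and> cmp C q u = y"
  shows "is_pullback C g t p q"
  unfolding is_pullback_def
  apply (rule exI[of _ B], rule exI[of _ D], rule exI[of _ T], rule exI[of _ P])
  using assms by blast

lemma pbE: assumes pb: "is_pullback C g t p q" and g: "g \<in> hom C B D" and t: "t \<in> hom C T D"
  obtains P where "p \<in> hom C P B" "q \<in> hom C P T" "cmp C g p = cmp C t q"
proof -
  obtain B' D' T' P where h: "g \<in> hom C B' D'" "t \<in> hom C T' D'" "p \<in> hom C P B'" "q \<in> hom C P T'"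
     "cmp C g p = cmp C t q" using pb unfolding is_pullback_def by blast
  have "B' = B" "T' = T" using homD(2)[OF g] homD(2)[OF h(1)] homD(2)[OF t] homD(2)[OF h(2)] by auto
  then show ?thesis using that h by blast
qed

lemma poE: assumes po: "is_pushout C a b a' b'" and a: "a \<in> hom C X D" and b: "b \<in> hom C X A"
  obtains P where "b' \<in> hom C D P" "a' \<in> hom C A P" "cmp C b' a = cmp C a' b"
   "\<And>S x y. x \<in> hom C D S \<Longrightarrow> y \<in> hom C A S \<Longrightarrow> cmp C x a = cmp C y b \<Longrightarrow>
      \<exists>!u. u \<in> hom C P S \<and> cmp C u b' = x \<and> cmp C u a' = y"
proof -
  obtain X' D' A' P where h: "a \<in> hom C X' D'" "b \<in> hom C X' A'" "b' \<in> hom C D' P" "a' \<in> hom C A' P"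
     "cmp C b' a = cmp C a' b"
     "\<forall>S x y. x \<in> hom C D' S \<and> y \<in> hom C A' S \<and> cmp C x a = cmp C y b \<longrightarrow>
        (\<exists>!u. u \<in> hom C P S \<and> cmp C u b' = x \<and> cmp C u a' = y)"
    using po unfolding is_pushout_def by blast
  have e: "D' = D" "A' = A" using homD(3)[OF a] homD(3)[OF h(1)] homD(3)[OF b] homD(3)[OF h(2)] by auto
  show ?thesis
  proof (rule that[of P])
    show "b' \<in> hom C D P" "a' \<in> hom C A P" "cmp C b' a = cmp C a' b" using h e by auto
    fix S x y assume "x \<in> hom C D S" "y \<in> hom C A S" "cmp C x a = cmp C y b"
    then show "\<exists>!u. u \<in> hom C P S \<and> cmp C u b' = x \<and> cmp C u a' = y"
      using h(6)[rule_format, of x S y] e by simp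
  qed
qed

lemma R2ax: assumes "deflation C E g" "t \<in> Ar C" "Cod C t = Cod C g"
  shows "(\<exists>p q. is_pullback C g t p q) \<and> (\<forall>p q. is_pullback C g t p q \<longrightarrow> deflation C E q)"
proof -
  have "\<forall>g t. deflation C E g \<and> t \<in> Ar C \<and> Cod C t = Cod C g \<longrightarrow>
        (\<exists>p q. is_pullback C g t p q) \<and>
        (\<forall>p q. is_pullback C g t p q \<longrightarrow> deflation C E q)"
    using dex unfolding deflation_exact_def by (elim conjE)
  then show ?thesis using assms by blast
qed

end

locale perc = dex +
  fixes \<A> :: "'o set"
  assumes perc: "adm_defl_percolating C E \<A>"
begin

lemma A1ax: assumes "(f, g) \<in> E" shows "Cod C f \<in> \<A> \<longleftrightarrow> Dom C f \<in> \<A> \<and> Cod C g \<in> \<A>"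
proof -
  have all: "\<forall>(f, g) \<in> E. Cod C f \<in> \<A> \<longleftrightarrow> Dom C f \<in> \<A> \<and> Cod C g \<in> \<A>"
    using perc unfolding adm_defl_percolating_def by (elim conjE)
  show ?thesis using bspec[OF all assms] by simp
qed

lemma A2ax: assumes "f \<in> hom C X Y" "Y \<in> \<A>"
  shows "\<exists>A' d i. A' \<in> \<A> \<and> d \<in> hom C X A' \<and> i \<in> hom C A' Y \<and>
            deflation C E d \<and> inflation C E i \<and> f = cmp C i d"
proof -
  have "\<forall>f X Y. f \<in> hom C X Y \<and> Y \<in> \<A> \<longrightarrow>
        (\<exists>A' d i. A' \<in> \<A> \<and> d \<in> hom C X A' \<and> i \<in> hom C A' Y \<and>
            deflation C E d \<and> inflation C E i \<and> f = cmp C i d)"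
    using perc unfolding adm_defl_percolating_def by (elim conjE)
  then show ?thesis using assms by blast
qed

lemma A3ax: assumes "inflation C E a" "deflation C E b" "Dom C a = Dom C b" "Cod C b \<in> \<A>"
  shows "(\<exists>a' b'. is_pushout C a b a' b') \<and>
        (\<forall>a' b'. is_pushout C a b a' b' \<longrightarrow> deflation C E b' \<and> inflation C E a')"
proof -
  have "\<forall>a b. inflation C E a \<and> deflation C E b \<and> Dom C a = Dom C b \<and> Cod C b \<in> \<A> \<longrightarrow>
        (\<exists>a' b'. is_pushout C a b a' b') \<and>
        (\<forall>a' b'. is_pushout C a b a' b' \<longrightarrow> deflation C E b' \<and> inflation C E a')"
    using perc unfolding adm_defl_percolating_def by (elim conjE)
  then show ?thesis using assms by blast
qed

lemma epi_A_defl: assumes h: "h \<in> hom C X Y" and Y: "Y \<in> \<A>" and eh: "is_epi C h"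
  shows "deflation C E h"
proof -
  obtain A' d i where A': "A' \<in> \<A>" and d: "d \<in> hom C X A'" and i: "i \<in> hom C A' Y"
    and dd: "deflation C E d" and ii: "inflation C E i" and hid: "h = cmp C i d"
    using A2ax[OF h Y] by blast
  obtain g where ig: "(i, g) \<in> E" using ii unfolding inflation_def by blast
  obtain K B G where i': "i \<in> hom C K B" and g': "g \<in> hom C B G" and ki: "is_kernel C i g"
    using confE[OF ig] by blast
  have "B = Y" using homD(3)[OF i] homD(3)[OF i'] by simp
  then have g: "g \<in> hom C Y G" using g' by simp
  have ki: "is_kernel C i g" using ki .
  have gi: "cmp C g i = zerm C A' G" using ker_zero[OF ki i g] .
  have G: "G \<in> Ob C" using homD(5)[OF g] .
  have "cmp C g h = cmp C (cmp C g i) d" using hid assoc[OF d i g] by simp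
  also have "\<dots> = zerm C X G" using gi zero_l[OF d G] by simp
  also have "\<dots> = cmp C (zerm C Y G) h" using zero_l[OF h G] by simp
  finally have g0: "g = zerm C Y G"
    using epiD[OF eh h g zero_hom[OF homD(5)[OF h] G]] by simp
  have Yo: "Y \<in> Ob C" using homD(5)[OF h] .
  have "cmp C g (idt C Y) = zerm C Y G" using idr[OF g] g0 by simp
  then obtain u where u: "u \<in> hom C Y A'" "cmp C i u = idt C Y"
    using ker_lift[OF ki i g id_hom[OF Yo]] by blast
  have A'o: "A' \<in> Ob C" using homD(4)[OF i] .
  have "cmp C i (cmp C u i) = cmp C i (idt C A')"
    using assoc[OF i u(1) i] u(2) idl[OF i] idr[OF i] by simp
  then have ui: "cmp C u i = idt C A'"
    using monoD[OF ker_mono[OF ki i g] i comp[OF i u(1)] id_hom[OF A'o]] by simp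
  obtain f where fd: "(f, d) \<in> E" using dd unfolding deflation_def by blast
  obtain F X' D' where f': "f \<in> hom C F X'" and d': "d \<in> hom C X' D'" and cd: "is_cokernel C d f"
    using confE[OF fd] by blast
  have "X' = X" using homD(2)[OF d] homD(2)[OF d'] by simp
  then have f: "f \<in> hom C F X" using f' by simp
  have df: "cmp C d f = zerm C F A'" using cok_zero[OF cd f d] .
  have chf: "is_cokernel C h f"
  proof (rule cokI[OF f h])
    show "cmp C h f = zerm C F Y"
      using hid assoc[OF f d i] df zero_r[OF i homD(4)[OF f]] by simp
    fix T t assume t: "t \<in> hom C X T" and tf: "cmp C t f = zerm C F T"
    obtain v where v: "v \<in> hom C A' T" "cmp C v d = t" using cok_desc[OF cd f d t tf] by blast
    have vu: "cmp C v u \<in> hom C Y T" using comp[OF u(1) v(1)] .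
    have "cmp C (cmp C v u) h = cmp C (cmp C v u) (cmp C i d)" using hid by simp
    also have "\<dots> = cmp C (cmp C (cmp C v u) i) d" using assoc[OF d i vu] .
    also have "\<dots> = cmp C (cmp C v (cmp C u i)) d" using assoc[OF i u(1) v(1)] by simp
    also have "\<dots> = t" using ui idr[OF v(1)] v(2) by simp
    finally show "\<exists>u. u \<in> hom C Y T \<and> cmp C u h = t" using vu by blast
  next
    show "is_epi C h" using eh .
  qed
  have "(f, h) \<in> E" using C_replace[OF fd chf] .
  then show ?thesis by (rule E_defl)
qed

end


context perc begin

lemma main:
  assumes a: "a \<in> hom C U V" and b: "b \<in> hom C V W"
    and ai: "A_inflation C E \<A> a" and bd: "A_deflation C E \<A> b"
  shows "admissible C E (cmp C b a) \<and>
         (\<exists>k. is_kernel C k (cmp C b a) \<and> Dom C k \<in> \<A>) \<and>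
         (\<exists>c. is_cokernel C c (cmp C b a) \<and> Cod C c \<in> \<A>)"
proof -
  obtain c where ac: "(a, c) \<in> E" and cA: "Cod C c \<in> \<A>" using ai unfolding A_inflation_def by blast
  obtain U1 V1 A1 where a1: "a \<in> hom C U1 V1" and c1: "c \<in> hom C V1 A1" and kac: "is_kernel C a c"
    and cca: "is_cokernel C c a" using confE[OF ac] by blast
  have "V1 = V" using homD(3)[OF a] homD(3)[OF a1] by simp
  then have c: "c \<in> hom C V A1" using c1 by simp
  have A1: "A1 \<in> \<A>" using cA homD(3)[OF c] by simp
  obtain k where kb: "(k, b) \<in> E" and kA: "Dom C k \<in> \<A>" using bd unfolding A_deflation_def by blast
  obtain A2 V2 W2 where k1: "k \<in> hom C A2 V2" and b1: "b \<in> hom C V2 W2" and kkb: "is_kernel C k b"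
    and cbk: "is_cokernel C b k" using confE[OF kb] by blast
  have "V2 = V" using homD(2)[OF b] homD(2)[OF b1] by simp
  then have k: "k \<in> hom C A2 V" using k1 by simp
  have A2: "A2 \<in> \<A>" using kA homD(2)[OF k] by simp
  have ck: "cmp C c k \<in> hom C A2 A1" using comp[OF k c] .
  obtain A' d i where A': "A' \<in> \<A>" and d: "d \<in> hom C A2 A'" and i: "i \<in> hom C A' A1"
    and dd: "deflation C E d" and ii: "inflation C E i" and ckid: "cmp C c k = cmp C i d"
    using A2ax[OF ck A1] by blast
  obtain j0 where j0d: "(j0, d) \<in> E" using dd unfolding deflation_def by blast
  obtain K A2' A'' where j01: "j0 \<in> hom C K A2'" and d1: "d \<in> hom C A2' A''" and kj0: "is_kernel C j0 d"
    and cdj: "is_cokernel C d j0" using confE[OF j0d] by blast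
  have "A2' = A2" using homD(2)[OF d] homD(2)[OF d1] by simp
  then have j0: "j0 \<in> hom C K A2" using j01 by simp
  obtain q where iq: "(i, q) \<in> E" using ii unfolding inflation_def by blast
  obtain A''' A1' Q where i1: "i \<in> hom C A''' A1'" and q1: "q \<in> hom C A1' Q" and kiq: "is_kernel C i q"
    and cqi: "is_cokernel C q i" using confE[OF iq] by blast
  have "A1' = A1" using homD(3)[OF i] homD(3)[OF i1] by simp
  then have q: "q \<in> hom C A1 Q" using q1 by simp
  have KA: "K \<in> \<A>" using A1ax[OF j0d] A2 homD(2,3)[OF j0] by simp
  have QA: "Q \<in> \<A>" using A1ax[OF iq] A1 homD(2,3)[OF i] homD(3)[OF q] by simp
  have Uo: "U \<in> Ob C" and Vo: "V \<in> Ob C" and Wo: "W \<in> Ob C" using homD(4,5)[OF a] homD(5)[OF b] by auto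
  have A1o: "A1 \<in> Ob C" and A2o: "A2 \<in> Ob C" and A'o: "A' \<in> Ob C" and Ko: "K \<in> Ob C" and Qo: "Q \<in> Ob C"
    using homD(5)[OF c] homD(4)[OF k] homD(5)[OF d] homD(4)[OF j0] homD(5)[OF q] by auto
  have ca0: "cmp C c a = zerm C U A1" using ker_zero[OF kac a c] .
  have bk0: "cmp C b k = zerm C A2 W" using ker_zero[OF kkb k b] .
  have dj0: "cmp C d j0 = zerm C K A'" using ker_zero[OF kj0 j0 d] .
  have qi0: "cmp C q i = zerm C A' Q" using ker_zero[OF kiq i q] .
  have ma: "is_mono C a" using ker_mono[OF kac a c] .
  have mk: "is_mono C k" using ker_mono[OF kkb k b] .
  have mj0: "is_mono C j0" using ker_mono[OF kj0 j0 d] .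
  have mi: "is_mono C i" using ker_mono[OF kiq i q] .
  have ec: "is_epi C c" using cok_epi[OF cca a c] .
  have eb: "is_epi C b" using cok_epi[OF cbk k b] .
  have ed: "is_epi C d" using cok_epi[OF cdj j0 d] .
  have eq: "is_epi C q" using cok_epi[OF cqi i q] .
  have ba: "cmp C b a \<in> hom C U W" using comp[OF a b] .

  have ckj: "cmp C c (cmp C k j0) = zerm C K A1"
  proof -
    have "cmp C c (cmp C k j0) = cmp C (cmp C i d) j0" using assoc[OF j0 k c] ckid by simp
    also have "\<dots> = cmp C i (cmp C d j0)" using assoc[OF j0 d i] by simp
    also have "\<dots> = zerm C K A1" using dj0 zero_r[OF i Ko] by simp
    finally show ?thesis .
  qed
  obtain j where j: "j \<in> hom C K U" and ajkj: "cmp C a j = cmp C k j0"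
    using ker_lift[OF kac a c comp[OF j0 k] ckj] by blast
  have ker: "is_kernel C j (cmp C b a)"
  proof (rule kerI[OF j ba])
    show "cmp C (cmp C b a) j = zerm C K W"
    proof -
      have "cmp C (cmp C b a) j = cmp C b (cmp C a j)" using assoc[OF j a b] by simp
      also have "\<dots> = cmp C (cmp C b k) j0" using ajkj assoc[OF j0 k b] by simp
      also have "\<dots> = zerm C K W" using bk0 zero_l[OF j0 Wo] by simp
      finally show ?thesis .
    qed
    fix T t assume t: "t \<in> hom C T U" and bat: "cmp C (cmp C b a) t = zerm C T W"
    have at: "cmp C a t \<in> hom C T V" using comp[OF t a] .
    have "cmp C b (cmp C a t) = zerm C T W" using bat assoc[OF t a b] by simp
    then obtain s where s: "s \<in> hom C T A2" and ks: "cmp C k s = cmp C a t"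
      using ker_lift[OF kkb k b at] by blast
    have To: "T \<in> Ob C" using homD(4)[OF t] .
    have "cmp C i (cmp C d s) = cmp C (cmp C i d) s" using assoc[OF s d i] .
    also have "\<dots> = cmp C c (cmp C k s)" using ckid assoc[OF s k c] by simp
    also have "\<dots> = cmp C (cmp C c a) t" using ks assoc[OF t a c] by simp
    also have "\<dots> = zerm C T A1" using ca0 zero_l[OF t A1o] by simp
    also have "\<dots> = cmp C i (zerm C T A')" using zero_r[OF i To] by simp
    finally have "cmp C d s = zerm C T A'"
      using monoD[OF mi i comp[OF s d] zero_hom[OF To A'o]] by simp
    then obtain u where u: "u \<in> hom C T K" and j0u: "cmp C j0 u = s"
      using ker_lift[OF kj0 j0 d s] by blast
    have "cmp C a (cmp C j u) = cmp C a t"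
      using assoc[OF u j a] ajkj assoc[OF u j0 k] j0u ks by simp
    then have "cmp C j u = t" using monoD[OF ma a comp[OF u j] t] by simp
    then show "\<exists>u. u \<in> hom C T K \<and> cmp C j u = t" using u by blast
  next
    have "is_mono C (cmp C a j)" using ajkj mono_comp[OF j0 k mj0 mk] by simp
    then show "is_mono C j" using mono_cancel[OF j a] by simp
  qed

  have qck: "cmp C (cmp C q c) k = zerm C A2 Q"
  proof -
    have "cmp C (cmp C q c) k = cmp C q (cmp C i d)" using assoc[OF k c q] ckid by simp
    also have "\<dots> = cmp C (cmp C q i) d" using assoc[OF d i q] .
    also have "\<dots> = zerm C A2 Q" using qi0 zero_l[OF d Qo] by simp
    finally show ?thesis .
  qed
  obtain e where e: "e \<in> hom C W Q" and ebqc: "cmp C e b = cmp C q c"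
    using cok_desc[OF cbk k b comp[OF c q] qck] by blast
  have ee: "is_epi C e"
  proof -
    have "is_epi C (cmp C e b)" using ebqc epi_comp[OF c q ec eq] by simp
    then show ?thesis using epi_cancel[OF b e] by simp
  qed
  have cok: "is_cokernel C e (cmp C b a)"
  proof (rule cokI[OF ba e])
    show "cmp C e (cmp C b a) = zerm C U Q"
    proof -
      have "cmp C e (cmp C b a) = cmp C (cmp C q c) a" using assoc[OF a b e] ebqc by simp
      also have "\<dots> = cmp C q (cmp C c a)" using assoc[OF a c q] by simp
      also have "\<dots> = zerm C U Q" using ca0 zero_r[OF q Uo] by simp
      finally show ?thesis .
    qed
    fix T t assume t: "t \<in> hom C W T" and tba: "cmp C t (cmp C b a) = zerm C U T"
    have tb: "cmp C t b \<in> hom C V T" using comp[OF b t] .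
    have To: "T \<in> Ob C" using homD(5)[OF t] .
    have "cmp C (cmp C t b) a = zerm C U T" using tba assoc[OF a b t] by simp
    then obtain s where s: "s \<in> hom C A1 T" and sc: "cmp C s c = cmp C t b"
      using cok_desc[OF cca a c tb] by blast
    have "cmp C (cmp C s i) d = cmp C s (cmp C c k)" using assoc[OF d i s] ckid by simp
    also have "\<dots> = cmp C t (cmp C b k)" using assoc[OF k c s] sc assoc[OF k b t] by simp
    also have "\<dots> = zerm C A2 T" using bk0 zero_r[OF t A2o] by simp
    also have "\<dots> = cmp C (zerm C A' T) d" using zero_l[OF d To] by simp
    finally have "cmp C s i = zerm C A' T"
      using epiD[OF ed d comp[OF i s] zero_hom[OF A'o To]] by simp
    then obtain s' where s': "s' \<in> hom C Q T" and s'q: "cmp C s' q = s"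
      using cok_desc[OF cqi i q s] by blast
    have "cmp C (cmp C s' e) b = cmp C t b"
      using assoc[OF b e s'] ebqc assoc[OF c q s'] s'q sc by simp
    then have "cmp C s' e = t" using epiD[OF eb b comp[OF e s'] t] by simp
    then show "\<exists>u. u \<in> hom C Q T \<and> cmp C u e = t" using s' by blast
  next
    show "is_epi C e" using ee .
  qed

  have adm: "admissible C E (cmp C b a)"
  proof -
    have kinf: "inflation C E k" using E_infl[OF kb] .
    have A3: "(\<exists>a' b'. is_pushout C k d a' b') \<and>
        (\<forall>a' b'. is_pushout C k d a' b' \<longrightarrow> deflation C E b' \<and> inflation C E a')"
      using A3ax[OF kinf dd] homD(2)[OF k] homD(2)[OF d] homD(3)[OF d] A' by simp
    then obtain n p where po: "is_pushout C k d n p" by blast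
    have dp: "deflation C E p" and infn: "inflation C E n" using A3 po by blast+
    obtain P where p: "p \<in> hom C V P" and n: "n \<in> hom C A' P" and pknd: "cmp C p k = cmp C n d"
      and UP: "\<And>S x y. x \<in> hom C V S \<Longrightarrow> y \<in> hom C A' S \<Longrightarrow> cmp C x k = cmp C y d \<Longrightarrow>
      \<exists>!u. u \<in> hom C P S \<and> cmp C u p = x \<and> cmp C u n = y"
      using poE[OF po k d] by blast
    have Po: "P \<in> Ob C" using homD(5)[OF p] .
    obtain r where r: "r \<in> hom C P A1" and rp: "cmp C r p = c" and rn: "cmp C r n = i"
      using UP[OF c i ckid] by blast
    have z0: "zerm C A' W \<in> hom C A' W" using zero_hom[OF A'o Wo] .
    have "cmp C b k = cmp C (zerm C A' W) d" using bk0 zero_l[OF d Wo] by simp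
    then obtain s where s: "s \<in> hom C P W" and sp: "cmp C s p = b" and sn: "cmp C s n = zerm C A' W"
      using UP[OF b z0] by blast
    have ep: "is_epi C p" using defl_epi[OF dp p] .
    have er: "is_epi C r" using epi_cancel[OF p r] rp ec by simp
    have es: "is_epi C s" using epi_cancel[OF p s] sp eb by simp
    have dr: "deflation C E r" using epi_A_defl[OF r A1 er] .
    obtain m0 where m0r: "(m0, r) \<in> E" using dr unfolding deflation_def by blast
    obtain I0 P' A1'' where m01: "m0 \<in> hom C I0 P'" and r1: "r \<in> hom C P' A1''" and km0: "is_kernel C m0 r"
      using confE[OF m0r] by blast
    have "P' = P" using homD(2)[OF r] homD(2)[OF r1] by simp
    then have m0: "m0 \<in> hom C I0 P" using m01 by simp
    have I0o: "I0 \<in> Ob C" using homD(4)[OF m0] .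
    have rm0: "cmp C r m0 = zerm C I0 A1" using ker_zero[OF km0 m0 r] .
    have mm0: "is_mono C m0" using ker_mono[OF km0 m0 r] .
    have "cmp C r (cmp C p a) = zerm C U A1" using assoc[OF a p r] rp ca0 by simp
    then obtain w0 where w0: "w0 \<in> hom C U I0" and m0w0: "cmp C m0 w0 = cmp C p a"
      using ker_lift[OF km0 m0 r comp[OF a p]] by blast
    have pb: "is_pullback C p m0 a w0"
    proof (rule pbI[OF p m0 a w0])
      show "cmp C p a = cmp C m0 w0" using m0w0 by simp
      fix S x y assume x: "x \<in> hom C S V" and y: "y \<in> hom C S I0" and pxy: "cmp C p x = cmp C m0 y"
      have So: "S \<in> Ob C" using homD(4)[OF x] .
      have "cmp C c x = cmp C r (cmp C p x)" using assoc[OF x p r] rp by simp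
      also have "\<dots> = cmp C (cmp C r m0) y" using pxy assoc[OF y m0 r] by simp
      also have "\<dots> = zerm C S A1" using rm0 zero_l[OF y A1o] by simp
      finally obtain z where z: "z \<in> hom C S U" and az: "cmp C a z = x"
        using ker_lift[OF kac a c x] by blast
      have "cmp C m0 (cmp C w0 z) = cmp C m0 y"
        using assoc[OF z w0 m0] m0w0 assoc[OF z a p] az pxy by simp
      then have w0z: "cmp C w0 z = y" using monoD[OF mm0 m0 comp[OF z w0] y] by simp
      show "\<exists>!u. u \<in> hom C S U \<and> cmp C a u = x \<and> cmp C w0 u = y"
      proof (rule ex1I[of _ z])
        show "z \<in> hom C S U \<and> cmp C a z = x \<and> cmp C w0 z = y" using z az w0z by simp
        fix v assume "v \<in> hom C S U \<and> cmp C a v = x \<and> cmp C w0 v = y"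
        then show "v = z" using monoD[OF ma a _ z] az by auto
      qed
    qed
    have dw0: "deflation C E w0"
      using R2ax[OF dp homD(1)[OF m0]] homD(3)[OF m0] homD(3)[OF p] pb by auto
    obtain gn where ngn: "(n, gn) \<in> E" using infn unfolding inflation_def by blast
    have csn: "is_cokernel C s n"
    proof (rule cokI[OF n s sn])
      fix T t assume t: "t \<in> hom C P T" and tn: "cmp C t n = zerm C A' T"
      have To: "T \<in> Ob C" using homD(5)[OF t] .
      have tp: "cmp C t p \<in> hom C V T" using comp[OF p t] .
      have tptn: "cmp C (cmp C t p) k = cmp C (cmp C t n) d"
        using assoc[OF k p t] pknd assoc[OF d n t] by simp
      have "cmp C (cmp C t p) k = zerm C A2 T" using tptn tn zero_l[OF d To] by simp
      then obtain u where u: "u \<in> hom C W T" and ub: "cmp C u b = cmp C t p"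
        using cok_desc[OF cbk k b tp] by blast
      have us: "cmp C u s \<in> hom C P T" using comp[OF s u] .
      have ex1: "\<exists>!v. v \<in> hom C P T \<and> cmp C v p = cmp C t p \<and> cmp C v n = cmp C t n"
        using UP[OF tp comp[OF n t] tptn] .
      have "cmp C (cmp C u s) p = cmp C t p" using assoc[OF p s u] sp ub by simp
      moreover have "cmp C (cmp C u s) n = cmp C t n"
        using assoc[OF n s u] sn zero_r[OF u A'o] tn by simp
      ultimately have "cmp C u s = t" using ex1_uniq[OF ex1, of "cmp C u s" t] us t by simp
      then show "\<exists>u. u \<in> hom C W T \<and> cmp C u s = t" using u by blast
    next
      show "is_epi C s" using es .
    qed
    have ns: "(n, s) \<in> E" using C_replace[OF ngn csn] .
    have ds: "deflation C E s" using E_defl[OF ns] .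
    have kns: "is_kernel C n s"
    proof -
      obtain X1 Y1 Z1 where n1: "n \<in> hom C X1 Y1" and s1: "s \<in> hom C Y1 Z1" and kk: "is_kernel C n s"
        using confE[OF ns] by blast
      show ?thesis using kk .
    qed
    have de: "deflation C E e" using epi_A_defl[OF e QA ee] .
    obtain mm where mme: "(mm, e) \<in> E" using de unfolding deflation_def by blast
    have esqr: "cmp C e s = cmp C q r"
    proof -
      have "cmp C (cmp C e s) p = cmp C (cmp C q r) p"
        using assoc[OF p s e] sp ebqc assoc[OF p r q] rp by simp
      then show ?thesis using epiD[OF ep p comp[OF s e] comp[OF r q]] by simp
    qed
    have sm0: "cmp C s m0 \<in> hom C I0 W" using comp[OF m0 s] .
    have zk: "\<And>T y. y \<in> hom C T I0 \<Longrightarrow> cmp C (cmp C s m0) y = zerm C T W \<Longrightarrow> y = zerm C T I0"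
    proof -
      fix T y assume y: "y \<in> hom C T I0" and sy: "cmp C (cmp C s m0) y = zerm C T W"
      have To: "T \<in> Ob C" using homD(4)[OF y] .
      have m0y: "cmp C m0 y \<in> hom C T P" using comp[OF y m0] .
      have "cmp C s (cmp C m0 y) = zerm C T W" using sy assoc[OF y m0 s] by simp
      then obtain z where z: "z \<in> hom C T A'" and nz: "cmp C n z = cmp C m0 y"
        using ker_lift[OF kns n s m0y] by blast
      have "cmp C i z = cmp C r (cmp C n z)" using assoc[OF z n r] rn by simp
      also have "\<dots> = cmp C (cmp C r m0) y" using nz assoc[OF y m0 r] by simp
      also have "\<dots> = zerm C T A1" using rm0 zero_l[OF y A1o] by simp
      also have "\<dots> = cmp C i (zerm C T A')" using zero_r[OF i To] by simp
      finally have z0: "z = zerm C T A'" using monoD[OF mi i z zero_hom[OF To A'o]] by simp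
      have "cmp C m0 y = zerm C T P" using nz z0 zero_r[OF n To] by simp
      also have "\<dots> = cmp C m0 (zerm C T I0)" using zero_r[OF m0 To] by simp
      finally show "y = zerm C T I0" using monoD[OF mm0 m0 y zero_hom[OF To I0o]] by simp
    qed
    have msm0: "is_mono C (cmp C s m0)" using mono_of_zero[OF sm0 zk] .
    have ksm0: "is_kernel C (cmp C s m0) e"
    proof (rule kerI[OF sm0 e])
      show "cmp C e (cmp C s m0) = zerm C I0 Q"
        using assoc[OF m0 s e] esqr assoc[OF m0 r q] rm0 zero_r[OF q I0o] by simp
      fix T t assume t: "t \<in> hom C T W" and et: "cmp C e t = zerm C T Q"
      have To: "T \<in> Ob C" using homD(4)[OF t] .
      have R2: "(\<exists>p q. is_pullback C s t p q) \<and> (\<forall>p q. is_pullback C s t p q \<longrightarrow> deflation C E q)"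
        using R2ax[OF ds homD(1)[OF t]] homD(3)[OF t] homD(3)[OF s] by simp
      then obtain t' \<sigma> where pbt: "is_pullback C s t t' \<sigma>" by blast
      have d\<sigma>: "deflation C E \<sigma>" using R2 pbt by blast
      obtain T' where t': "t' \<in> hom C T' P" and \<sigma>: "\<sigma> \<in> hom C T' T" and st': "cmp C s t' = cmp C t \<sigma>"
        using pbE[OF pbt s t] by blast
      have T'o: "T' \<in> Ob C" using homD(4)[OF t'] .
      obtain \<kappa> where \<kappa>\<sigma>: "(\<kappa>, \<sigma>) \<in> E" using d\<sigma> unfolding deflation_def by blast
      obtain N T'' T''' where \<kappa>1: "\<kappa> \<in> hom C N T''" and \<sigma>1: "\<sigma> \<in> hom C T'' T'''"
        and c\<sigma>: "is_cokernel C \<sigma> \<kappa>" using confE[OF \<kappa>\<sigma>] by blast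
      have "T'' = T'" using homD(2)[OF \<sigma>] homD(2)[OF \<sigma>1] by simp
      then have \<kappa>: "\<kappa> \<in> hom C N T'" using \<kappa>1 by simp
      have No: "N \<in> Ob C" using homD(4)[OF \<kappa>] .
      have \<sigma>\<kappa>: "cmp C \<sigma> \<kappa> = zerm C N T" using cok_zero[OF c\<sigma> \<kappa> \<sigma>] .
      have e\<sigma>: "is_epi C \<sigma>" using cok_epi[OF c\<sigma> \<kappa> \<sigma>] .
      have rt': "cmp C r t' \<in> hom C T' A1" using comp[OF t' r] .
      have "cmp C q (cmp C r t') = cmp C (cmp C e s) t'" using assoc[OF t' r q] esqr by simp
      also have "\<dots> = cmp C (cmp C e t) \<sigma>" using assoc[OF t' s e] st' assoc[OF \<sigma> t e] by simp
      also have "\<dots> = zerm C T' Q" using et zero_l[OF \<sigma> Qo] by simp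
      finally obtain z where z: "z \<in> hom C T' A'" and iz: "cmp C i z = cmp C r t'"
        using ker_lift[OF kiq i q rt'] by blast
      define nz where "nz = cmp C n z"
      have nzh: "nz \<in> hom C T' P" unfolding nz_def using comp[OF z n] .
      have negh: "negm C nz \<in> hom C T' P" using neg_hom[OF nzh] .
      define t'' where "t'' = addm C t' (negm C nz)"
      have t''h: "t'' \<in> hom C T' P" unfolding t''_def using add_hom[OF t' negh] .
      have rnz: "cmp C r nz = cmp C r t'" unfolding nz_def using assoc[OF z n r] rn iz by simp
      have "cmp C r t'' = addm C (cmp C r t') (cmp C r (negm C nz))"
        unfolding t''_def using distl[OF t' negh r] .
      also have "\<dots> = addm C (cmp C r nz) (cmp C r (negm C nz))" using rnz by simp
      also have "\<dots> = cmp C r (addm C nz (negm C nz))" using distl[OF nzh negh r] by simp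
      also have "\<dots> = zerm C T' A1" using add_neg_r[OF nzh] zero_r[OF r T'o] by simp
      finally obtain y' where y': "y' \<in> hom C T' I0" and m0y': "cmp C m0 y' = t''"
        using ker_lift[OF km0 m0 r t''h] by blast
      have snz: "cmp C s nz = zerm C T' W" unfolding nz_def using assoc[OF z n s] sn zero_l[OF z Wo] by simp
      have sneg: "cmp C s (negm C nz) = zerm C T' W"
        using cmp_neg[OF nzh s] snz neg_zero[OF T'o Wo] by simp
      have "cmp C s t'' = addm C (cmp C s t') (cmp C s (negm C nz))"
        unfolding t''_def using distl[OF t' negh s] .
      also have "\<dots> = cmp C s t'" using sneg add_zero_r[OF comp[OF t' s]] by simp
      finally have st'': "cmp C s t'' = cmp C s t'" .
      have smy': "cmp C (cmp C s m0) y' = cmp C t \<sigma>" using assoc[OF y' m0 s] m0y' st'' st' by simp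
      have "cmp C (cmp C s m0) (cmp C y' \<kappa>) = cmp C t (cmp C \<sigma> \<kappa>)"
        using assoc[OF \<kappa> y' sm0] smy' assoc[OF \<kappa> \<sigma> t] by simp
      also have "\<dots> = zerm C N W" using \<sigma>\<kappa> zero_r[OF t No] by simp
      finally have "cmp C y' \<kappa> = zerm C N I0" using zk[OF comp[OF \<kappa> y']] by simp
      then obtain y where y: "y \<in> hom C T I0" and y\<sigma>: "cmp C y \<sigma> = y'"
        using cok_desc[OF c\<sigma> \<kappa> \<sigma> y'] by blast
      have "cmp C (cmp C (cmp C s m0) y) \<sigma> = cmp C t \<sigma>"
        using assoc[OF \<sigma> y sm0] y\<sigma> smy' by simp
      then have "cmp C (cmp C s m0) y = t" using epiD[OF e\<sigma> \<sigma> comp[OF y sm0] t] by simp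
      then show "\<exists>u. u \<in> hom C T I0 \<and> cmp C (cmp C s m0) u = t" using y by blast
    next
      show "is_mono C (cmp C s m0)" using msm0 .
    qed
    have "(cmp C s m0, e) \<in> E" using K_replace[OF mme ksm0] .
    then have infl: "inflation C E (cmp C s m0)" by (rule E_infl)
    have eqba: "cmp C b a = cmp C (cmp C s m0) w0"
      using assoc[OF w0 m0 s] m0w0 assoc[OF a p s] sp by simp
    show ?thesis unfolding admissible_def
      by (rule exI[of _ w0], rule exI[of _ "cmp C s m0"]) (use dw0 infl homD(3)[OF w0] homD(2)[OF sm0] eqba in simp)
  qed

  show ?thesis
  proof (intro conjI)
    show "admissible C E (cmp C b a)" using adm .
    show "\<exists>k. is_kernel C k (cmp C b a) \<and> Dom C k \<in> \<A>" using ker KA homD(2)[OF j] by blast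
    show "\<exists>c. is_cokernel C c (cmp C b a) \<and> Cod C c \<in> \<A>" using cok QA homD(3)[OF e] by blast
  qed
qed

end

theorem mainTheorem10:
  fixes C :: "('o, 'm) addcat" and E :: "('m \<times> 'm) set" and \<A> :: "'o set"
  assumes "deflation_exact C E"
    and "adm_defl_percolating C E \<A>"
    and "a \<in> hom C U V" and "b \<in> hom C V W"
    and "A_inflation C E \<A> a"
    and "A_deflation C E \<A> b"
  shows "admissible C E (cmp C b a) \<and>
         (\<exists>k. is_kernel C k (cmp C b a) \<and> Dom C k \<in> \<A>) \<and>
         (\<exists>c. is_cokernel C c (cmp C b a) \<and> Cod C c \<in> \<A>)"
proof -
  have P: "perc C E \<A>" unfolding perc_def perc_axioms_def dex_def using assms(1,2) by blast
  show ?thesis using perc.main[OF P assms(3-6)] .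
qed

end
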